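(* Let $W$ be an eventually periodic subset of $\mathbb{Z}^d$ with periods $u_1,\dots,u_d$, and let $\mathscr{W}_1,\mathcal{W}$ be as defined in the context. Suppose $\mathscr{W}_1$ is nonempty and $\pi(\mathcal{W}\cup\mathscr{W}_1)=\mathbb{Z}^d/\mathcal{L}$. Then $W$ has a minimal complement in $\mathbb{Z}^d$.
   Context: $d\geqslant1$, $\mathbb{N}=\{0,1,2,\dots\}$. Let $u_1,\dots,u_d\in\mathbb{Z}^d$ satisfy no nontrivial $\mathbb{Z}$-linear relation, $\mathcal{L}=\mathbb{Z}u_1+\dots+\mathbb{Z}u_d$, $P=\mathbb{N}u_1+\dots+\mathbb{N}u_d$, $\pi:\mathbb{Z}^d\to\mathbb{Z}^d/\mathcal{L}$ the quotient map. A nonempty $X\subseteq\mathbb{Z}^d$ is eventually periodic with periods $u_1,\dots,u_d$ if $X\subseteq F+P$ for some nonempty finite $F\subseteq\mathbb{Z}^d$ and $x+P\subseteq X$ for all but finitely many $x\in X$. For such $W$: $\mathscr{W}=\{w\in W:w+P\not\subseteq W\}$; $\mathcal{W}=\{w\in W\setminus\mathscr{W}:(w-P)\cap(W\setminus\mathscr{W})=\{w\}\}$; $\mathscr{W}_1$ is the set of elements of $\mathscr{W}$ congruent modulo $\mathcal{L}$ to no element of $\mathcal{W}$. A nonempty $M\subseteq\mathbb{Z}^d$ is a complement of $W$ if $M+W=\mathbb{Z}^d$, and a minimal complement if no proper subset of $M$ is a complement of $W$. *)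

theory Defs
  imports "HOL-Analysis.Analysis"
begin

text \<open>Z^d is modelled as int ^ 'n, with d = CARD('n). The periods u_1..u_d are a family
  u :: 'n => int ^ 'n.\<close>

definition Zindep :: "('n::finite \<Rightarrow> int ^ 'n) \<Rightarrow> bool" where
  "Zindep u \<longleftrightarrow> (\<forall>c :: 'n \<Rightarrow> int. (\<Sum>i\<in>UNIV. c i *s u i) = 0 \<longrightarrow> (\<forall>i. c i = 0))"

definition lat :: "('n::finite \<Rightarrow> int ^ 'n) \<Rightarrow> (int ^ 'n) set" where
  "lat u = {\<Sum>i\<in>UNIV. c i *s u i | c :: 'n \<Rightarrow> int. True}"

definition cone :: "('n::finite \<Rightarrow> int ^ 'n) \<Rightarrow> (int ^ 'n) set" where
  "cone u = {\<Sum>i\<in>UNIV. int (c i) *s u i | c :: 'n \<Rightarrow> nat. True}"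

definition eventually_periodic :: "('n::finite \<Rightarrow> int ^ 'n) \<Rightarrow> (int ^ 'n) set \<Rightarrow> bool" where
  "eventually_periodic u X \<longleftrightarrow> X \<noteq> {} \<and>
     (\<exists>F. finite F \<and> F \<noteq> {} \<and> X \<subseteq> {f + p | f p. f \<in> F \<and> p \<in> cone u}) \<and>
     finite {x \<in> X. \<not> ((\<lambda>p. x + p) ` cone u \<subseteq> X)}"

definition scrW :: "('n::finite \<Rightarrow> int ^ 'n) \<Rightarrow> (int ^ 'n) set \<Rightarrow> (int ^ 'n) set" where
  "scrW u W = {w \<in> W. \<not> ((\<lambda>p. w + p) ` cone u \<subseteq> W)}"

definition calW :: "('n::finite \<Rightarrow> int ^ 'n) \<Rightarrow> (int ^ 'n) set \<Rightarrow> (int ^ 'n) set" where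
  "calW u W = {w \<in> W - scrW u W. (\<lambda>p. w - p) ` cone u \<inter> (W - scrW u W) = {w}}"

definition scrW1 :: "('n::finite \<Rightarrow> int ^ 'n) \<Rightarrow> (int ^ 'n) set \<Rightarrow> (int ^ 'n) set" where
  "scrW1 u W = {w \<in> scrW u W. \<not> (\<exists>v \<in> calW u W. w - v \<in> lat u)}"

text \<open>pi(S) = Z^d / L : every point is congruent mod L to some element of S.\<close>
definition covers_quotient :: "('n::finite \<Rightarrow> int ^ 'n) \<Rightarrow> (int ^ 'n) set \<Rightarrow> bool" where
  "covers_quotient u S \<longleftrightarrow> (\<forall>x. \<exists>s \<in> S. x - s \<in> lat u)"

definition is_complement :: "(int ^ 'n::finite) set \<Rightarrow> (int ^ 'n) set \<Rightarrow> bool" where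
  "is_complement M W \<longleftrightarrow> M \<noteq> {} \<and> {m + w | m w. m \<in> M \<and> w \<in> W} = UNIV"

definition is_minimal_complement :: "(int ^ 'n::finite) set \<Rightarrow> (int ^ 'n) set \<Rightarrow> bool" where
  "is_minimal_complement M W \<longleftrightarrow> is_complement M W \<and> (\<forall>M'. M' \<subset> M \<longrightarrow> \<not> is_complement M' W)"

end

theory Submission
  imports Defs
begin

definition comb :: "('n::finite \<Rightarrow> int ^ 'n) \<Rightarrow> ('n \<Rightarrow> int) \<Rightarrow> int ^ 'n" where
  "comb u c = (\<Sum>i\<in>UNIV. c i *s u i)"

lemma comb_add: "comb u a + comb u b = comb u (\<lambda>i. a i + b i)"
  by (simp add: comb_def vec_eq_iff algebra_simps sum.distrib)

lemma comb_diff: "comb u a - comb u b = comb u (\<lambda>i. a i - b i)"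
  by (simp add: comb_def vec_eq_iff algebra_simps sum_subtractf)

lemma comb_zero: "comb u (\<lambda>i. 0) = 0"
  by (simp add: comb_def vec_eq_iff)

lemma comb_smult: "comb u (\<lambda>i. c * q i) = c *s comb u q"
  by (simp add: comb_def vec_eq_iff sum_distrib_left mult.assoc)

lemma lat_eq: "lat u = range (comb u)"
  by (auto simp: lat_def comb_def)

lemma cone_eq: "cone u = {comb u (\<lambda>i. int (c i)) | c. True}"
  by (auto simp: cone_def comb_def)

lemma lat_add: "x \<in> lat u \<Longrightarrow> y \<in> lat u \<Longrightarrow> x + y \<in> lat u"
  unfolding lat_eq by (auto simp: comb_add)

lemma lat_diff: "x \<in> lat u \<Longrightarrow> y \<in> lat u \<Longrightarrow> x - y \<in> lat u"
  unfolding lat_eq by (auto simp: comb_diff)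

lemma lat_zero: "0 \<in> lat u"
  unfolding lat_eq using comb_zero by (metis rangeI)

lemma comb_lat: "comb u c \<in> lat u"
  unfolding lat_eq by simp

lemma Zindep_inj: "Zindep u \<Longrightarrow> comb u a = comb u b \<Longrightarrow> a = b"
proof -
  assume z: "Zindep u" and e: "comb u a = comb u b"
  have "comb u (\<lambda>i. a i - b i) = 0" using e comb_diff[of u a b] by simp
  then have "\<forall>i. a i - b i = 0" using z unfolding Zindep_def comb_def
    by (auto dest: spec[where x="\<lambda>i. a i - b i"])
  then show "a = b" by auto
qed

lemma exists_calW:
  assumes z: "Zindep u" and ep: "eventually_periodic u W" and w: "w \<in> W - scrW u W"
  shows "\<exists>v\<in>calW u W. w - v \<in> lat u"
proof -
  obtain F where F: "finite F" "W \<subseteq> {f + p | f p. f \<in> F \<and> p \<in> cone u}"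
    using ep unfolding eventually_periodic_def by blast
  define E where "E f = (SOME e::'a \<Rightarrow> nat. w - f = comb u (\<lambda>i. int (e i)))" for f
  define Bd where "Bd = (\<Sum>f\<in>F. sum (E f) UNIV)"
  have bound: "sum d UNIV \<le> Bd" if dW: "w - comb u (\<lambda>i. int (d i)) \<in> W" for d
  proof -
    obtain f c where fc: "f \<in> F" "w - comb u (\<lambda>i. int (d i)) = f + comb u (\<lambda>i. int (c i))"
      using dW F(2) unfolding cone_eq by blast
    have "w - f = comb u (\<lambda>i. int (d i + c i))"
      using fc(2) comb_add[of u "\<lambda>i. int (d i)" "\<lambda>i. int (c i)"]
      by (simp add: algebra_simps)
    then have "w - f = comb u (\<lambda>i. int (E f i))"
      unfolding E_def by (rule someI[where x="\<lambda>i. d i + c i"])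
    with \<open>w - f = comb u (\<lambda>i. int (d i + c i))\<close>
    have "(\<lambda>i. int (d i + c i)) = (\<lambda>i. int (E f i))"
      using Zindep_inj[OF z] by metis
    then have "\<forall>i. d i \<le> E f i" by (metis le_add1 of_nat_eq_iff)
    then have "sum d UNIV \<le> sum (E f) UNIV" by (simp add: sum_mono)
    also have "\<dots> \<le> Bd" unfolding Bd_def
      by (rule member_le_sum) (use fc F in auto)
    finally show ?thesis .
  qed
  define S where "S = {sum d UNIV | d::'a \<Rightarrow> nat. w - comb u (\<lambda>i. int (d i)) \<in> W - scrW u W}"
  have "0 \<in> S" unfolding S_def using w comb_zero[of u]
    by (auto intro!: exI[where x="\<lambda>i. 0"])
  have "S \<subseteq> {..Bd}" unfolding S_def using bound by auto
  then have fS: "finite S" using finite_subset by blast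
  then have "Max S \<in> S" using \<open>0 \<in> S\<close> Max_in by blast
  then obtain d0 where d0: "sum d0 UNIV = Max S" "w - comb u (\<lambda>i. int (d0 i)) \<in> W - scrW u W"
    unfolding S_def by (smt (verit) mem_Collect_eq)
  define v0 where "v0 = w - comb u (\<lambda>i. int (d0 i))"
  have "v0 \<in> calW u W"
  proof -
    have "(\<lambda>p. v0 - p) ` cone u \<inter> (W - scrW u W) \<subseteq> {v0}"
    proof
      fix v' assume "v' \<in> (\<lambda>p. v0 - p) ` cone u \<inter> (W - scrW u W)"
      then obtain d' where v': "v' = v0 - comb u (\<lambda>i. int (d' i))" "v' \<in> W - scrW u W"
        unfolding cone_eq by blast
      have "v' = w - comb u (\<lambda>i. int (d0 i + d' i))"
        using v'(1) comb_add[of u "\<lambda>i. int (d0 i)" "\<lambda>i. int (d' i)"] unfolding v0_def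
        by (simp add: algebra_simps)
      then have "sum (\<lambda>i. d0 i + d' i) UNIV \<in> S" unfolding S_def using v'(2) by blast
      then have "sum (\<lambda>i. d0 i + d' i) UNIV \<le> sum d0 UNIV" using d0(1) fS Max_ge by metis
      then have "sum d' UNIV = 0" by (simp add: sum.distrib)
      then have "\<forall>i. d' i = 0" by simp
      then show "v' \<in> {v0}" using v'(1) comb_zero[of u] by simp
    qed
    moreover have "v0 \<in> (\<lambda>p. v0 - p) ` cone u"
      unfolding cone_eq using comb_zero[of u]
      by (auto intro!: image_eqI[where x=0] exI[where x="\<lambda>i. 0"])
    ultimately show ?thesis using d0(2) unfolding calW_def v0_def by auto
  qed
  moreover have "w - v0 \<in> lat u" unfolding v0_def by (simp add: comb_lat)
  ultimately show ?thesis by blast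
qed

theorem corollary4p14:
  fixes u :: "'n::finite \<Rightarrow> int ^ 'n" and W :: "(int ^ 'n) set"
  assumes "Zindep u"
    and "eventually_periodic u W"
    and "scrW1 u W \<noteq> {}"
    and "covers_quotient u (calW u W \<union> scrW1 u W)"
  shows "\<exists>M. is_minimal_complement M W"
proof -
  note z = assms(1) and ep = assms(2)
  obtain s0 where s0: "s0 \<in> scrW1 u W" using assms(3) by blast
  define good where "good y \<longleftrightarrow> \<not> (\<exists>w\<in>W - scrW u W. y - w \<in> lat u)" for y
  have fin: "finite (scrW u W)" using ep unfolding eventually_periodic_def scrW_def by blast
  have good_class: "good z" if "good y" "y - z \<in> lat u" for y z
  proof -
    have "(y - z) + (z - w) = y - w" for w by simp
    then show ?thesis using that lat_add unfolding good_def by metis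
  qed
  have good_W: "w \<in> scrW u W" if "good w" "w \<in> W" for w
    using that lat_zero[of u] unfolding good_def by (metis DiffI diff_self)
  have s0good: "good s0"
  proof -
    { fix w assume w: "w \<in> W - scrW u W" "s0 - w \<in> lat u"
      obtain v where v: "v \<in> calW u W" "w - v \<in> lat u" using exists_calW[OF z ep w(1)] by blast
      have "(s0 - w) + (w - v) = s0 - v" by simp
      then have "s0 - v \<in> lat u" using lat_add w(2) v(2) by metis
      then have False using s0 v(1) unfolding scrW1_def by blast }
    then show ?thesis unfolding good_def by blast
  qed
  have scrW_W: "scrW u W \<subseteq> W" unfolding scrW_def by blast
  have meets: "\<exists>s\<in>W. x - s \<in> lat u" for x
  proof -
    have "calW u W \<union> scrW1 u W \<subseteq> W" unfolding calW_def scrW1_def scrW_def by auto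
    then show ?thesis using assms(4) unfolding covers_quotient_def by blast
  qed
  define n :: nat where "n = 1 + nat (\<Sum>v\<in>scrW u W. \<Sum>v'\<in>scrW u W. \<Sum>i\<in>UNIV. \<bar>v$i - v'$i\<bar>)"
  have npos: "n > 0" unfolding n_def by simp
  define K where "K = {comb u (\<lambda>i. int n * q i) | q. True}"
  have K_lat: "K \<subseteq> lat u" unfolding K_def using comb_lat by blast
  have K0: "0 \<in> K" unfolding K_def using comb_zero[of u] by (auto intro!: exI[where x="\<lambda>i. 0"])
  have K_add: "k + k' \<in> K" if kk: "k \<in> K" "k' \<in> K" for k k'
  proof -
    obtain q q' where "k = comb u (\<lambda>i. int n * q i)" "k' = comb u (\<lambda>i. int n * q' i)"
      using kk unfolding K_def by blast
    then have "k + k' = comb u (\<lambda>i. int n * (q i + q' i))"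
      by (simp add: comb_add algebra_simps)
    then show ?thesis unfolding K_def by (auto intro!: exI[where x="\<lambda>i. q i + q' i"])
  qed
  have K_diff: "k - k' \<in> K" if kk: "k \<in> K" "k' \<in> K" for k k'
  proof -
    obtain q q' where "k = comb u (\<lambda>i. int n * q i)" "k' = comb u (\<lambda>i. int n * q' i)"
      using kk unfolding K_def by blast
    then have "k - k' = comb u (\<lambda>i. int n * (q i - q' i))"
      by (simp add: comb_diff algebra_simps)
    then show ?thesis unfolding K_def by (auto intro!: exI[where x="\<lambda>i. q i - q' i"])
  qed
  have inj: "v = v'" if vv: "v \<in> scrW u W" "v' \<in> scrW u W" "v - v' \<in> K" for v v'
  proof -
    obtain q where q: "v - v' = int n *s comb u q"
      using vv(3) unfolding K_def by (auto simp: comb_smult)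
    have "v $ j = v' $ j" for j
    proof -
      have "\<bar>v$j - v'$j\<bar> \<le> (\<Sum>i\<in>UNIV. \<bar>v$i - v'$i\<bar>)"
        by (rule member_le_sum) auto
      also have "\<dots> \<le> (\<Sum>v'\<in>scrW u W. \<Sum>i\<in>UNIV. \<bar>v$i - v'$i\<bar>)"
        by (rule member_le_sum[where f="\<lambda>v'. \<Sum>i\<in>UNIV. \<bar>v$i - v'$i\<bar>"]) (use vv fin in auto)
      also have "\<dots> \<le> (\<Sum>v\<in>scrW u W. \<Sum>v'\<in>scrW u W. \<Sum>i\<in>UNIV. \<bar>v$i - v'$i\<bar>)"
        by (rule member_le_sum[where f="\<lambda>v. \<Sum>v'\<in>scrW u W. \<Sum>i\<in>UNIV. \<bar>v$i - v'$i\<bar>"])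
          (use vv fin in \<open>auto intro: sum_nonneg\<close>)
      finally have lt: "\<bar>v$j - v'$j\<bar> < int n" unfolding n_def by linarith
      have eq: "v$j - v'$j = int n * (comb u q $ j)"
        using arg_cong[OF q, of "\<lambda>x. x $ j"] by simp
      show ?thesis
      proof (rule ccontr)
        assume "v $ j \<noteq> v' $ j"
        then have "comb u q $ j \<noteq> 0" using eq by auto
        then have "\<bar>comb u q $ j\<bar> \<ge> 1" by linarith
        then have "int n * 1 \<le> int n * \<bar>comb u q $ j\<bar>" by (intro mult_left_mono) auto
        then have "\<bar>int n * (comb u q $ j)\<bar> \<ge> int n" by (simp add: abs_mult)
        then show False using lt eq by simp
      qed
    qed
    then show ?thesis by (simp add: vec_eq_iff)
  qed
  have decomp: "\<exists>r q. (\<forall>i. r i < n) \<and> y = comb u (\<lambda>i. int (r i)) + comb u (\<lambda>i. int n * q i)"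
    if yl: "y \<in> lat u" for y
  proof -
    obtain c where c: "y = comb u c" using yl unfolding lat_eq by blast
    define r where "r i = nat (c i mod int n)" for i
    define q where "q i = c i div int n" for i
    have "c i = int (r i) + int n * q i" for i
      unfolding r_def q_def using npos by simp
    then have "c = (\<lambda>i. int (r i) + int n * q i)" by (rule ext)
    then have "y = comb u (\<lambda>i. int (r i)) + comb u (\<lambda>i. int n * q i)"
      unfolding c comb_add by simp
    moreover have "\<forall>i. r i < n" unfolding r_def using npos
      by (simp add: nat_less_iff)
    ultimately show ?thesis by blast
  qed
  define T where "T = (\<lambda>r. comb u (\<lambda>i. int (r i))) ` {r. \<forall>i. r i < n}"
  have finT: "finite T"
  proof -
    have "{r::'n \<Rightarrow> nat. \<forall>i. r i < n} = Pi\<^sub>E UNIV (\<lambda>_. {..<n})"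
      by (auto simp: PiE_UNIV_domain)
    then have "finite {r::'n \<Rightarrow> nat. \<forall>i. r i < n}" by (simp add: finite_PiE)
    then show ?thesis unfolding T_def by simp
  qed
  have T_lat: "T \<subseteq> lat u" unfolding T_def using comb_lat by blast
  define \<Phi> where "\<Phi> B \<longleftrightarrow> (\<forall>x. good x \<longrightarrow> (\<exists>b\<in>B. \<exists>k\<in>K. \<exists>w\<in>W. x = b + k + w))" for B
  have PhiT: "\<Phi> T"
    unfolding \<Phi>_def
  proof (intro allI impI)
    fix x
    obtain s where s: "s \<in> W" "x - s \<in> lat u" using meets by blast
    obtain r q where rq: "\<forall>i. r i < n" "x - s = comb u (\<lambda>i. int (r i)) + comb u (\<lambda>i. int n * q i)"
      using decomp[OF s(2)] by blast
    have "comb u (\<lambda>i. int (r i)) \<in> T" unfolding T_def using rq(1) by blast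
    moreover have "comb u (\<lambda>i. int n * q i) \<in> K" unfolding K_def by blast
    moreover have "x = comb u (\<lambda>i. int (r i)) + comb u (\<lambda>i. int n * q i) + s"
      using rq(2) by (simp add: algebra_simps)
    ultimately show "\<exists>b\<in>T. \<exists>k\<in>K. \<exists>w\<in>W. x = b + k + w" using s(1) by blast
  qed
  obtain B where B: "B \<subseteq> T \<and> \<Phi> B" "\<And>B'. B' \<subseteq> T \<and> \<Phi> B' \<Longrightarrow> card B \<le> card B'"
    using ex_has_least_nat[of "\<lambda>B. B \<subseteq> T \<and> \<Phi> B" T card] PhiT by blast
  have BT: "B \<subseteq> T" and PhiB: "\<Phi> B" using B(1) by auto
  have finB: "finite B" using BT finT finite_subset by blast
  have Bne: "B \<noteq> {}" using PhiB s0good unfolding \<Phi>_def by blast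
  define M where "M = {b + k | b k. b \<in> B \<and> k \<in> K}"
  have comp: "is_complement M W"
    unfolding is_complement_def
  proof (intro conjI)
    show "M \<noteq> {}" using Bne K0 unfolding M_def by fastforce
    show "{m + w |m w. m \<in> M \<and> w \<in> W} = UNIV"
    proof (intro set_eqI iffI)
      fix x :: "int ^ 'n"
      show "x \<in> {m + w |m w. m \<in> M \<and> w \<in> W}"
      proof (cases "good x")
        case True
        then obtain b k w where "b \<in> B" "k \<in> K" "w \<in> W" "x = b + k + w"
          using PhiB unfolding \<Phi>_def by blast
        then show ?thesis unfolding M_def by blast
      next
        case False
        then obtain w where w: "w \<in> W - scrW u W" "x - w \<in> lat u" unfolding good_def by blast
        obtain b where b: "b \<in> B" using Bne by blast
        have "x - w - b \<in> lat u" using lat_diff w(2) b BT T_lat by blast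
        then obtain r q where rq: "x - w - b = comb u (\<lambda>i. int (r i)) + comb u (\<lambda>i. int n * q i)"
          using decomp by blast
        have "comb u (\<lambda>i. int (r i)) \<in> cone u" unfolding cone_eq by blast
        then have "w + comb u (\<lambda>i. int (r i)) \<in> W" using w(1) unfolding scrW_def by blast
        moreover have "b + comb u (\<lambda>i. int n * q i) \<in> M" unfolding M_def K_def using b by blast
        moreover have "x = (b + comb u (\<lambda>i. int n * q i)) + (w + comb u (\<lambda>i. int (r i)))"
          using rq by (simp add: algebra_simps)
        ultimately show ?thesis by blast
      qed
    qed simp
  qed
  have "\<not> is_complement M' W" if sub: "M' \<subset> M" for M'
  proof
    assume c': "is_complement M' W"
    obtain m where m: "m \<in> M" "m \<notin> M'" using sub by blast
    obtain b k where bk: "b \<in> B" "k \<in> K" "m = b + k" using m(1) unfolding M_def by blast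
    have "card (B - {b}) < card B" using finB bk(1) by (metis card_Diff1_less)
    then have "\<not> \<Phi> (B - {b})" using B(2)[of "B - {b}"] BT by auto
    then obtain x where x: "good x" "\<not> (\<exists>b'\<in>B - {b}. \<exists>k\<in>K. \<exists>w\<in>W. x = b' + k + w)"
      unfolding \<Phi>_def by blast
    then obtain b1 k0 w0 where b1: "b1 \<in> B" "k0 \<in> K" "w0 \<in> W" "x = b1 + k0 + w0"
      using PhiB unfolding \<Phi>_def by blast
    have "b1 = b" using x(2) b1 by blast
    have "m + w0 \<in> {m + w |m w. m \<in> M' \<and> w \<in> W}" using c' unfolding is_complement_def by simp
    then obtain m' w' where mw: "m' \<in> M'" "w' \<in> W" "m + w0 = m' + w'" by blast
    then obtain b' k' where bk': "b' \<in> B" "k' \<in> K" "m' = b' + k'" using sub unfolding M_def by blast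
    have "b' = b"
    proof (rule ccontr)
      assume "b' \<noteq> b"
      have "x = b' + (k' - k + k0) + w'"
        using b1(4) \<open>b1 = b\<close> mw(3) bk(3) bk'(3) by (simp add: algebra_simps)
      moreover have "k' - k + k0 \<in> K" using K_add K_diff bk'(2) bk(2) b1(2) by blast
      ultimately show False using x(2) bk'(1) \<open>b' \<noteq> b\<close> mw(2) by blast
    qed
    have "x - w0 \<in> lat u" using b1(4) \<open>b1 = b\<close> bk(1) BT T_lat K_lat b1(2) lat_add
      by (metis add_diff_cancel_right' subsetD)
    then have gw0: "good w0" using good_class x(1) by blast
    then have w0s: "w0 \<in> scrW u W" using good_W b1(3) by blast
    have d: "w0 - w' = k' - k" using mw(3) bk(3) bk'(3) \<open>b' = b\<close> by (simp add: algebra_simps)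
    then have "w0 - w' \<in> K" using K_diff bk'(2) bk(2) by simp
    then have "good w'" using gw0 good_class K_lat by blast
    then have "w' \<in> scrW u W" using good_W mw(2) by blast
    then have "w0 = w'" using inj w0s \<open>w0 - w' \<in> K\<close> by blast
    then have "k = k'" using d by simp
    then have "m = m'" using bk(3) bk'(3) \<open>b' = b\<close> by simp
    then show False using m(2) mw(1) by simp
  qed
  then show ?thesis using comp unfolding is_minimal_complement_def by blast
qed

end
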